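(* Let $n\ge1$, $\mathcal{X}$ the simplex in $\mathbb{R}^{n+1}$, $\theta$ a kernel, $\Phi$ a Lipschitz continuous smooth function on an open neighborhood of $\mathcal{X}$, and $\eta\ge0$. Let $x(t)$ be an interior solution of the inertial dynamics (ID) that is defined for all $t\ge0$, and let $x^*\in\mathcal{X}$. Assume that for every $\delta>0$ and every $T>0$ there exists an interval $J$ of length at least $T$ such that $\max_\alpha|x_\alpha(t)-x^*_\alpha|<\delta$ for all $t\in J$. Then $$\frac{\partial\Phi}{\partial x_\alpha}(x^* )=\frac{\partial\Phi}{\partial x_\beta}(x^* )\quad\text{for all }\alpha,\beta\in\mathrm{supp}(x^* ).$$
   Context: $\mathcal{X}=\{x\in\mathbb{R}^{n+1}:x_\alpha\ge0,\sum_\alpha x_\alpha=1\}$ with relative interior $\mathcal{X}^\circ$; $\mathrm{supp}(x)=\{\alpha:x_\alpha>0\}$. A kernel is a $C^\infty$ function $\theta:[0,\infty)\to\mathbb{R}\cup\{+\infty\}$ with $\theta(x)<\infty$ for $x>0$, $\lim_{x\to0^+}\theta'(x)=-\infty$, $\theta''>0$, $\theta'''<0$ on $(0,\infty)$. With $\theta''_\alpha=\theta''(x_\alpha)$, $\theta'''_\alpha=\theta'''(x_\alpha)$, $\Theta''=(\sum_\beta1/\theta''_\beta)^{-1}$, $v_\alpha=\partial\Phi/\partial x_\alpha$, the inertial dynamics (ID) on $\mathcal{X}^\circ$ are $$\ddot x_\alpha=\frac{1}{\theta''_\alpha}\Big[v_\alpha-\sum_{\beta}\frac{\Theta''}{\theta''_\beta}v_\beta\Big]-\frac{1}{2\theta''_\alpha}\Big[\theta'''_\alpha\dot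 x_\alpha^2-\sum_\beta\frac{\Theta''}{\theta''_\beta}\theta'''_\beta\dot x_\beta^2\Big]-\eta\dot x_\alpha.$$ *)

theory Defs
  imports "HOL-Analysis.Analysis"
begin

text \<open>Points of R^(n+1) are vectors real^'n with CARD('n) = n+1.\<close>

definition prob_simplex :: "(real ^ 'n) set" where
  "prob_simplex = {x. (\<forall>a. x $ a \<ge> 0) \<and> (\<Sum>a\<in>UNIV. x $ a) = 1}"

definition prob_simplex_interior :: "(real ^ 'n) set" where
  "prob_simplex_interior = {x. (\<forall>a. x $ a > 0) \<and> (\<Sum>a\<in>UNIV. x $ a) = 1}"

definition pdiff :: "'n \<Rightarrow> (real ^ 'n \<Rightarrow> real) \<Rightarrow> real ^ 'n \<Rightarrow> real" where
  "pdiff a f x = (THE d. ((\<lambda>t. f (x + t *\<^sub>R axis a 1)) has_real_derivative d) (at 0))"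

fun iter_pdiff :: "'n list \<Rightarrow> (real ^ 'n \<Rightarrow> real) \<Rightarrow> real ^ 'n \<Rightarrow> real" where
  "iter_pdiff [] f = f"
| "iter_pdiff (a # as) f = pdiff a (iter_pdiff as f)"

definition smooth_on_pd :: "(real ^ 'n) set \<Rightarrow> (real ^ 'n \<Rightarrow> real) \<Rightarrow> bool" where
  "smooth_on_pd U f \<longleftrightarrow>
     (\<forall>as. continuous_on U (iter_pdiff as f) \<and>
       (\<forall>x\<in>U. \<forall>a. ((\<lambda>t. iter_pdiff as f (x + t *\<^sub>R axis a 1))
                         has_real_derivative pdiff a (iter_pdiff as f) x) (at 0)))"

text \<open>A kernel, represented by its (finite) values on (0,oo); the value at 0 plays no role.\<close>
definition kernel :: "(real \<Rightarrow> real) \<Rightarrow> bool" where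
  "kernel \<theta> \<longleftrightarrow>
     (\<forall>k. \<forall>x>0. ((deriv ^^ k) \<theta> has_real_derivative (deriv ^^ Suc k) \<theta> x) (at x)) \<and>
     filterlim (deriv \<theta>) at_bot (at_right 0) \<and>
     (\<forall>x>0. (deriv ^^ 2) \<theta> x > 0) \<and>
     (\<forall>x>0. (deriv ^^ 3) \<theta> x < 0)"

definition ID_rhs ::
  "(real \<Rightarrow> real) \<Rightarrow> (real ^ 'n \<Rightarrow> real) \<Rightarrow> real \<Rightarrow> real ^ 'n \<Rightarrow> real ^ 'n \<Rightarrow> real ^ 'n" where
  "ID_rhs \<theta> \<Phi> \<eta> x xd =
    (let th2 = (\<lambda>a. (deriv ^^ 2) \<theta> (x $ a));
         th3 = (\<lambda>a. (deriv ^^ 3) \<theta> (x $ a));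
         Th2 = 1 / (\<Sum>b\<in>UNIV. 1 / th2 b);
         v = (\<lambda>a. pdiff a \<Phi> x)
     in \<chi> a. (1 / th2 a) * (v a - (\<Sum>b\<in>UNIV. Th2 / th2 b * v b))
            - (1 / (2 * th2 a)) * (th3 a * (xd $ a)\<^sup>2 - (\<Sum>b\<in>UNIV. Th2 / th2 b * th3 b * (xd $ b)\<^sup>2))
            - \<eta> * xd $ a)"

end

theory Submission
  imports Defs
begin


lemma vd_comp:
  fixes f :: "real \<Rightarrow> real ^ 'n"
  assumes "(f has_vector_derivative f') F"
  shows "((\<lambda>s. f s $ i) has_real_derivative f' $ i) F"
proof -
  have "((\<lambda>s. f s $ i) has_derivative (\<lambda>x. (x *\<^sub>R f') $ i)) F"
    using bounded_linear.has_derivative[OF bounded_linear_vec_nth assms[unfolded has_vector_derivative_def]] .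
  moreover have "(\<lambda>x. (x *\<^sub>R f') $ i) = (*) (f' $ i)" by (auto simp: mult.commute)
  ultimately show ?thesis by (simp add: has_field_derivative_def)
qed

lemma taylor_fwd:
  fixes f f' f'' :: "real \<Rightarrow> real"
  assumes h: "h \<ge> 0"
    and d1: "\<And>s. p \<le> s \<Longrightarrow> s \<le> p + h \<Longrightarrow> (f has_real_derivative f' s) (at s)"
    and d2: "\<And>s. p \<le> s \<Longrightarrow> s \<le> p + h \<Longrightarrow> (f' has_real_derivative f'' s) (at s)"
    and K: "\<And>s. p \<le> s \<Longrightarrow> s \<le> p + h \<Longrightarrow> f'' s \<ge> - K"
  shows "f (p + h) \<ge> f p + f' p * h - K * h^2 / 2"
proof -
  have g: "f' p \<le> f' s + K * (s - p)" if "p \<le> s" "s \<le> p + h" for s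
  proof -
    have "(\<lambda>u. f' u + K * u) p \<le> (\<lambda>u. f' u + K * u) s"
      apply (rule DERIV_nonneg_imp_nondecreasing[of p s "\<lambda>u. f' u + K * u"])
      using that apply simp
      subgoal for u
        apply (rule exI[of _ "f'' u + K"])
        using d2[of u] K[of u] that
        by (auto intro!: derivative_eq_intros)
      done
    then show ?thesis by (simp add: algebra_simps)
  qed
  have "(\<lambda>u. f u - f' p * u + K * (u - p)^2 / 2) p \<le> (\<lambda>u. f u - f' p * u + K * (u - p)^2 / 2) (p + h)"
    apply (rule DERIV_nonneg_imp_nondecreasing[of p "p+h" "\<lambda>u. f u - f' p * u + K * (u - p)^2 / 2"])
    using h apply simp
    subgoal for u
      apply (rule exI[of _ "f' u - f' p + K * (u - p)"])
      using d1[of u] g[of u]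
      by (auto intro!: derivative_eq_intros simp: algebra_simps) (simp add: field_simps)
    done
  then show ?thesis by (simp add: algebra_simps power2_eq_square)
qed

lemma taylor_bwd:
  fixes f f' f'' :: "real \<Rightarrow> real"
  assumes h: "h \<ge> 0"
    and d1: "\<And>s. p - h \<le> s \<Longrightarrow> s \<le> p \<Longrightarrow> (f has_real_derivative f' s) (at s)"
    and d2: "\<And>s. p - h \<le> s \<Longrightarrow> s \<le> p \<Longrightarrow> (f' has_real_derivative f'' s) (at s)"
    and K: "\<And>s. p - h \<le> s \<Longrightarrow> s \<le> p \<Longrightarrow> f'' s \<ge> - K"
  shows "f (p - h) \<ge> f p - f' p * h - K * h^2 / 2"
proof -
  have g: "f' s \<le> f' p + K * (p - s)" if "p - h \<le> s" "s \<le> p" for s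
  proof -
    have "(\<lambda>u. f' u + K * u) s \<le> (\<lambda>u. f' u + K * u) p"
      apply (rule DERIV_nonneg_imp_nondecreasing[of s p "\<lambda>u. f' u + K * u"])
      using that apply simp
      subgoal for u
        apply (rule exI[of _ "f'' u + K"])
        using d2[of u] K[of u] that
        by (auto intro!: derivative_eq_intros)
      done
    then show ?thesis by (simp add: algebra_simps)
  qed
  have "(\<lambda>u. - f u + f' p * u - K * (u - p)^2 / 2) (p - h) \<le> (\<lambda>u. - f u + f' p * u - K * (u - p)^2 / 2) p"
    apply (rule DERIV_nonneg_imp_nondecreasing[of "p-h" p "\<lambda>u. - f u + f' p * u - K * (u - p)^2 / 2"])
    using h apply simp
    subgoal for u
      apply (rule exI[of _ "- f' u + f' p - K * (u - p)"])
      using d1[of u] g[of u]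
      by (auto intro!: derivative_eq_intros simp: algebra_simps) (simp add: field_simps)
    done
  then show ?thesis by (simp add: algebra_simps power2_eq_square)
qed

lemma onesided:
  fixes f f' f'' :: "real \<Rightarrow> real"
  assumes h: "h > 0"
    and d1: "\<And>s. p - h \<le> s \<Longrightarrow> s \<le> p + h \<Longrightarrow> (f has_real_derivative f' s) (at s)"
    and d2: "\<And>s. p - h \<le> s \<Longrightarrow> s \<le> p + h \<Longrightarrow> (f' has_real_derivative f'' s) (at s)"
    and K: "\<And>s. p - h \<le> s \<Longrightarrow> s \<le> p + h \<Longrightarrow> f'' s \<ge> - K"
    and rho: "\<And>s. p - h \<le> s \<Longrightarrow> s \<le> p + h \<Longrightarrow> \<bar>f s - f p\<bar> \<le> \<rho>"
  shows "\<bar>f' p\<bar> \<le> \<rho> / h + K * h / 2"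
proof -
  have 1: "f (p + h) \<ge> f p + f' p * h - K * h^2 / 2"
    by (rule taylor_fwd[where f''=f'' and K=K]) (use h d1 d2 K in auto)
  have 2: "f (p - h) \<ge> f p - f' p * h - K * h^2 / 2"
    by (rule taylor_bwd[where f''=f'' and K=K]) (use h d1 d2 K in auto)
  have r1: "f (p + h) - f p \<le> \<rho>" using rho[of "p+h"] h by auto
  have r2: "f (p - h) - f p \<le> \<rho>" using rho[of "p-h"] h by auto
  have "f' p * h \<le> \<rho> + K * h^2 / 2" using 1 r1 by linarith
  hence a: "f' p \<le> \<rho> / h + K * h / 2" using h by (simp add: field_simps power2_eq_square)
  have "- f' p * h \<le> \<rho> + K * h^2 / 2" using 2 r2 by linarith
  hence b: "- f' p \<le> \<rho> / h + K * h / 2" using h by (simp add: field_simps power2_eq_square)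
  show ?thesis using a b by linarith
qed



lemma ID_comp:
  "ID_rhs \<theta> \<Phi> \<eta> x xd $ a =
    (1 / (deriv ^^ 2) \<theta> (x $ a)) * (pdiff a \<Phi> x - (\<Sum>b\<in>UNIV. (1 / (\<Sum>c\<in>UNIV. 1 / (deriv ^^ 2) \<theta> (x $ c))) / (deriv ^^ 2) \<theta> (x $ b) * pdiff b \<Phi> x))
   - (1 / (2 * (deriv ^^ 2) \<theta> (x $ a))) * ((deriv ^^ 3) \<theta> (x $ a) * (xd $ a)\<^sup>2
        - (\<Sum>b\<in>UNIV. (1 / (\<Sum>c\<in>UNIV. 1 / (deriv ^^ 2) \<theta> (x $ c))) / (deriv ^^ 2) \<theta> (x $ b) * (deriv ^^ 3) \<theta> (x $ b) * (xd $ b)\<^sup>2))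
   - \<eta> * xd $ a"
  by (simp add: ID_rhs_def Let_def)

lemma weights:
  fixes w :: "'n::finite \<Rightarrow> real"
  assumes "\<And>b. w b > 0"
  shows "(\<Sum>b\<in>UNIV. (1 / (\<Sum>c\<in>UNIV. 1 / w c)) / w b) = 1"
proof -
  have pos: "(\<Sum>c\<in>UNIV. 1 / w c) > 0"
    by (rule sum_pos) (use assms in auto)
  have "(\<Sum>b\<in>UNIV. (1 / (\<Sum>c\<in>UNIV. 1 / w c)) / w b) = (1 / (\<Sum>c\<in>UNIV. 1 / w c)) * (\<Sum>b\<in>UNIV. 1 / w b)"
    by (simp add: sum_distrib_left)
  also have "\<dots> = 1" using pos by simp
  finally show ?thesis .
qed

lemma acc_upper:
  fixes x xd :: "real ^ 'n"
  assumes xpos: "\<And>b. x $ b > 0"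
    and th2pos: "\<And>s. s > 0 \<Longrightarrow> (deriv ^^ 2) \<theta> s > 0"
    and th3neg: "\<And>s. s > 0 \<Longrightarrow> (deriv ^^ 3) \<theta> s < 0"
    and V: "\<And>b. \<bar>pdiff b \<Phi> x\<bar> \<le> V"
    and L2: "L2 > 0" "L2 \<le> (deriv ^^ 2) \<theta> (x $ g)"
    and U3: "- (deriv ^^ 3) \<theta> (x $ g) \<le> U3"
    and eta: "\<eta> \<ge> 0"
  shows "ID_rhs \<theta> \<Phi> \<eta> x xd $ g \<le> (2 * V / L2 + \<eta> / 2) + (U3 / (2 * L2) + \<eta> / 2 + 1) * (xd $ g)\<^sup>2"
proof -
  define w where "w b = (deriv ^^ 2) \<theta> (x $ b)" for b
  have wpos: "w b > 0" for b unfolding w_def using xpos th2pos by auto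
  define Th where "Th = 1 / (\<Sum>c\<in>UNIV. 1 / w c)"
  have Thpos: "Th > 0" unfolding Th_def by (rule divide_pos_pos) (auto intro!: sum_pos simp: wpos)
  define S where "S = (\<Sum>b\<in>UNIV. Th / w b * pdiff b \<Phi> x)"
  define R where "R = (\<Sum>b\<in>UNIV. Th / w b * (deriv ^^ 3) \<theta> (x $ b) * (xd $ b)\<^sup>2)"
  have sw: "(\<Sum>b\<in>UNIV. Th / w b) = 1" unfolding Th_def using weights[of w] wpos by simp
  have Rle: "R \<le> 0" unfolding R_def
    apply (rule sum_nonpos)
  proof -
    fix b
    have "Th / w b > 0" using Thpos wpos[of b] by simp
    moreover have "(deriv ^^ 3) \<theta> (x $ b) < 0" using th3neg xpos by auto
    ultimately have "Th / w b * (deriv ^^ 3) \<theta> (x $ b) \<le> 0" using mult_pos_neg less_imp_le by blast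
    thus "Th / w b * (deriv ^^ 3) \<theta> (x $ b) * (xd $ b)\<^sup>2 \<le> 0"
      using mult_nonpos_nonneg zero_le_power2 by blast
  qed
  have "\<bar>S\<bar> \<le> (\<Sum>b\<in>UNIV. \<bar>Th / w b * pdiff b \<Phi> x\<bar>)" unfolding S_def by (rule sum_abs)
  also have "\<dots> \<le> (\<Sum>b\<in>UNIV. Th / w b * V)"
    apply (rule sum_mono)
  proof -
    fix b
    have "\<bar>Th / w b * pdiff b \<Phi> x\<bar> = Th / w b * \<bar>pdiff b \<Phi> x\<bar>"
      using Thpos wpos[of b] by (simp add: abs_mult)
    also have "\<dots> \<le> Th / w b * V" apply (rule mult_left_mono) using V Thpos wpos[of b] by auto
    finally show "\<bar>Th / w b * pdiff b \<Phi> x\<bar> \<le> Th / w b * V" .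
  qed
  also have "\<dots> = (\<Sum>b\<in>UNIV. Th / w b) * V" by (rule sum_distrib_right[symmetric])
  also have "\<dots> = V" using sw by simp
  finally have Sb: "\<bar>S\<bar> \<le> V" .
  have eq: "ID_rhs \<theta> \<Phi> \<eta> x xd $ g = (1 / w g) * (pdiff g \<Phi> x - S)
      - (1 / (2 * w g)) * ((deriv ^^ 3) \<theta> (x $ g) * (xd $ g)\<^sup>2 - R) - \<eta> * xd $ g"
    unfolding ID_comp S_def R_def Th_def w_def by simp
  have t1: "(1 / w g) * (pdiff g \<Phi> x - S) \<le> 2 * V / L2"
  proof -
    have "(1 / w g) * (pdiff g \<Phi> x - S) \<le> (1 / w g) * (2 * V)"
      apply (rule mult_left_mono) using V[of g] Sb wpos[of g] by auto
    also have "\<dots> \<le> (1 / L2) * (2 * V)"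
      apply (rule mult_right_mono) using L2 V[of g] unfolding w_def by (auto simp: frac_le)
    finally show ?thesis by simp
  qed
  have t2: "- (1 / (2 * w g)) * ((deriv ^^ 3) \<theta> (x $ g) * (xd $ g)\<^sup>2 - R) \<le> U3 / (2 * L2) * (xd $ g)\<^sup>2"
  proof -
    have "- (1 / (2 * w g)) * ((deriv ^^ 3) \<theta> (x $ g) * (xd $ g)\<^sup>2 - R)
        \<le> (1 / (2 * w g)) * (- (deriv ^^ 3) \<theta> (x $ g) * (xd $ g)\<^sup>2)"
      using Rle wpos[of g] by (simp add: field_simps)
    also have "\<dots> \<le> (1 / (2 * L2)) * (U3 * (xd $ g)\<^sup>2)"
    proof (rule mult_mono)
      show "1 / (2 * w g) \<le> 1 / (2 * L2)" using L2 unfolding w_def by (auto simp: frac_le)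
      have "- (deriv ^^ 3) \<theta> (x $ g) * (xd $ g)\<^sup>2 \<le> U3 * (xd $ g)\<^sup>2"
        by (rule mult_right_mono) (use U3 in auto)
      thus "- (deriv ^^ 3) \<theta> (x $ g) * (xd $ g)\<^sup>2 \<le> U3 * (xd $ g)\<^sup>2" .
      show "0 \<le> 1 / (2 * L2)" using L2 by simp
      have "- (deriv ^^ 3) \<theta> (x $ g) > 0" using th3neg xpos by auto
      thus "0 \<le> - (deriv ^^ 3) \<theta> (x $ g) * (xd $ g)\<^sup>2" using mult_nonneg_nonneg[of "- (deriv ^^ 3) \<theta> (x $ g)" "(xd $ g)\<^sup>2"] zero_le_power2[of "xd $ g"] by (simp only: less_imp_le)
    qed
    finally show ?thesis by simp
  qed
  have t3: "- \<eta> * xd $ g \<le> \<eta> / 2 + (\<eta> / 2 + 1) * (xd $ g)\<^sup>2"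
  proof -
    have "\<bar>xd $ g\<bar> \<le> 1/2 + (xd $ g)\<^sup>2 / 2"
      using sum_squares_ge_zero[of "\<bar>xd $ g\<bar> - 1" 0]
      by (simp add: power2_eq_square algebra_simps abs_mult_self_eq)
    hence "- \<eta> * xd $ g \<le> \<eta> * (1/2 + (xd $ g)\<^sup>2 / 2)"
    proof -
      have "- xd $ g \<le> 1/2 + (xd $ g)\<^sup>2 / 2" using \<open>\<bar>xd $ g\<bar> \<le> _\<close> by linarith
      from mult_left_mono[OF this eta] show ?thesis by simp
    qed
    also have "\<dots> \<le> \<eta> / 2 + (\<eta> / 2 + 1) * (xd $ g)\<^sup>2"
      by (simp add: algebra_simps)
    finally show ?thesis .
  qed
  show ?thesis unfolding eq using t1 t2 t3 by (simp add: algebra_simps)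
qed

lemma y_identity:
  fixes x xd :: "real ^ 'n"
  assumes "(deriv ^^ 2) \<theta> (x $ a) \<noteq> 0" "(deriv ^^ 2) \<theta> (x $ b) \<noteq> 0"
  shows "((deriv ^^ 3) \<theta> (x $ a) * xd $ a * xd $ a + (deriv ^^ 2) \<theta> (x $ a) * ID_rhs \<theta> \<Phi> \<eta> x xd $ a)
       - ((deriv ^^ 3) \<theta> (x $ b) * xd $ b * xd $ b + (deriv ^^ 2) \<theta> (x $ b) * ID_rhs \<theta> \<Phi> \<eta> x xd $ b)
     = (pdiff a \<Phi> x - pdiff b \<Phi> x) + (deriv ^^ 3) \<theta> (x $ a) * (xd $ a)\<^sup>2 / 2
       - (deriv ^^ 3) \<theta> (x $ b) * (xd $ b)\<^sup>2 / 2
       - \<eta> * ((deriv ^^ 2) \<theta> (x $ a) * xd $ a - (deriv ^^ 2) \<theta> (x $ b) * xd $ b)"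
proof -
  define Th where "Th = 1 / (\<Sum>c\<in>UNIV. 1 / (deriv ^^ 2) \<theta> (x $ c))"
  define S where "S = (\<Sum>b\<in>UNIV. Th / (deriv ^^ 2) \<theta> (x $ b) * pdiff b \<Phi> x)"
  define R where "R = (\<Sum>b\<in>UNIV. Th / (deriv ^^ 2) \<theta> (x $ b) * (deriv ^^ 3) \<theta> (x $ b) * (xd $ b)\<^sup>2)"
  have e: "ID_rhs \<theta> \<Phi> \<eta> x xd $ c = (1 / (deriv ^^ 2) \<theta> (x $ c)) * (pdiff c \<Phi> x - S)
      - (1 / (2 * (deriv ^^ 2) \<theta> (x $ c))) * ((deriv ^^ 3) \<theta> (x $ c) * (xd $ c)\<^sup>2 - R) - \<eta> * xd $ c" for c
    unfolding ID_comp S_def R_def Th_def by simp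
  have m: "(deriv ^^ 2) \<theta> (x $ c) * ID_rhs \<theta> \<Phi> \<eta> x xd $ c = (pdiff c \<Phi> x - S)
      - ((deriv ^^ 3) \<theta> (x $ c) * (xd $ c)\<^sup>2 - R) / 2 - \<eta> * ((deriv ^^ 2) \<theta> (x $ c) * xd $ c)"
    if "(deriv ^^ 2) \<theta> (x $ c) \<noteq> 0" for c
    unfolding e using that by (simp add: field_simps)
  show ?thesis unfolding m[OF assms(1)] m[OF assms(2)] by (simp add: field_simps power2_eq_square)
qed



lemma exp_lip1:
  fixes B u w :: real
  assumes "B \<ge> 0" "w \<le> u" "w \<ge> 0"
  shows "\<bar>exp (- B * u) - exp (- B * w)\<bar> \<le> B * \<bar>u - w\<bar>"
proof -
  have le: "exp (- B * u) \<le> exp (- B * w)" using assms by (simp add: mult_left_mono)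
  have "exp (- B * w) - exp (- B * u) = exp (- B * w) * (1 - exp (- (B * (u - w))))"
    by (simp add: algebra_simps flip: exp_add)
  also have "\<dots> \<le> 1 * (1 - exp (- (B * (u - w))))"
  proof (rule mult_right_mono)
    show "exp (- B * w) \<le> 1" using assms by (simp add: mult_nonneg_nonneg)
    show "0 \<le> 1 - exp (- (B * (u - w)))" using assms by simp
  qed
  also have "\<dots> \<le> B * (u - w)" using exp_ge_add_one_self[of "- (B * (u - w))"] by simp
  finally show ?thesis using le assms by simp
qed


lemma exp_lip:
  fixes B u w :: real
  assumes "B \<ge> 0" "u \<ge> 0" "w \<ge> 0"
  shows "\<bar>exp (- B * u) - exp (- B * w)\<bar> \<le> B * \<bar>u - w\<bar>"
proof (cases "w \<le> u")
  case True thus ?thesis using exp_lip1 assms by blast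
next
  case False
  hence "\<bar>exp (- B * w) - exp (- B * u)\<bar> \<le> B * \<bar>w - u\<bar>" using exp_lip1[of B u w] assms by simp
  thus ?thesis by (simp add: abs_minus_commute)
qed



lemma main_contra:
  fixes \<theta> :: "real \<Rightarrow> real"
    and \<Phi> :: "real ^ 'n \<Rightarrow> real"
    and U :: "(real ^ 'n) set"
    and \<eta> :: real
    and x xd :: "real \<Rightarrow> real ^ 'n"
    and xs :: "real ^ 'n"
  assumes ker: "kernel \<theta>"
    and U: "open U" "prob_simplex \<subseteq> U"
    and smooth: "smooth_on_pd U \<Phi>"
    and eta: "\<eta> \<ge> 0"
    and interior: "\<forall>t\<ge>0. x t \<in> prob_simplex_interior"
    and dx: "\<forall>t\<ge>0. (x has_vector_derivative xd t) (at t within {0..})"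
    and ddx: "\<forall>t\<ge>0. (xd has_vector_derivative ID_rhs \<theta> \<Phi> \<eta> (x t) (xd t)) (at t within {0..})"
    and xs: "xs \<in> prob_simplex"
    and recur: "\<forall>\<delta>>0. \<forall>T>0. \<exists>a\<ge>0. \<forall>t\<in>{a..a+T}. \<forall>\<alpha>. \<bar>x t $ \<alpha> - xs $ \<alpha>\<bar> < \<delta>"
    and al: "xs $ \<alpha> > 0" and be: "xs $ \<beta> > 0"
    and cpos: "pdiff \<beta> \<Phi> xs < pdiff \<alpha> \<Phi> xs"
  shows False
proof -
  define th2 where "th2 = (deriv ^^ 2) \<theta>"
  define th3 where "th3 = (deriv ^^ 3) \<theta>"
  have d2: "(th2 has_real_derivative th3 s) (at s)" if "s > 0" for s
    using ker that unfolding kernel_def th2_def th3_def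
    by (metis numeral_2_eq_2 numeral_3_eq_3)
  have d3: "\<exists>D. (th3 has_real_derivative D) (at s)" if "s > 0" for s
    using ker that unfolding kernel_def th3_def by blast
  have th2pos: "th2 s > 0" if "s > 0" for s using ker that unfolding kernel_def th2_def by blast
  have th3neg: "th3 s < 0" if "s > 0" for s using ker that unfolding kernel_def th3_def by blast
  define m where "m = min (xs $ \<alpha>) (xs $ \<beta>) / 2"
  have m0: "m > 0" unfolding m_def using al be by simp
  have ma: "m \<le> xs $ \<alpha> / 2" "m \<le> xs $ \<beta> / 2" unfolding m_def by auto
  have xsle1: "xs $ g \<le> 1" for g
  proof -
    have "xs $ g \<le> (\<Sum>a\<in>UNIV. xs $ a)"
      by (rule member_le_sum) (use xs in \<open>auto simp: prob_simplex_def\<close>)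
    thus ?thesis using xs by (simp add: prob_simplex_def)
  qed
  have m1: "m \<le> 1" using ma xsle1[of \<alpha>] by simp
  have c2: "continuous_on {m..1} th2"
    by (rule DERIV_continuous_on[where D = "\<lambda>s. th3 s"]) (use d2 m0 in \<open>auto intro: has_field_derivative_at_within\<close>)
  have c3: "continuous_on {m..1} th3"
    apply (rule continuous_at_imp_continuous_on)
  proof
    fix s assume "s \<in> {m..1}"
    then obtain D where "(th3 has_real_derivative D) (at s)" using d3[of s] m0 by auto
    thus "isCont th3 s" by (rule DERIV_isCont)
  qed
  obtain s2 where s2: "s2 \<in> {m..1}" "\<forall>s\<in>{m..1}. th2 s2 \<le> th2 s"
    using continuous_attains_inf[OF compact_Icc _ c2] m1 by auto
  define L2 where "L2 = th2 s2"
  have L2: "L2 > 0" unfolding L2_def using s2 m0 th2pos by auto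
  obtain s2' where s2': "s2' \<in> {m..1}" "\<forall>s\<in>{m..1}. th2 s \<le> th2 s2'"
    using continuous_attains_sup[OF compact_Icc _ c2] m1 by auto
  define U2 where "U2 = th2 s2'"
  have U2: "U2 > 0" unfolding U2_def using s2' m0 th2pos by auto
  have c3': "continuous_on {m..1} (\<lambda>s. - th3 s)" using c3 by (intro continuous_intros)
  obtain s3 where s3: "s3 \<in> {m..1}" "\<forall>s\<in>{m..1}. - th3 s \<le> - th3 s3"
    using continuous_attains_sup[OF compact_Icc _ c3'] m1 by auto
  define U3 where "U3 = - th3 s3"
  have U3: "U3 > 0" unfolding U3_def using s3 m0 th3neg by force
  have L2b: "L2 \<le> th2 s" "th2 s \<le> U2" "\<bar>th3 s\<bar> \<le> U3" if "m \<le> s" "s \<le> 1" for s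
    using that s2 s2' s3 th3neg[of s] m0 unfolding L2_def U2_def U3_def by auto
  define c where "c = pdiff \<alpha> \<Phi> xs - pdiff \<beta> \<Phi> xs"
  have c0: "c > 0" unfolding c_def using cpos by simp
  have xsU: "xs \<in> U" using xs U by auto
  have cont: "isCont (pdiff g \<Phi>) xs" for g
  proof -
    have "continuous_on U (iter_pdiff [g] \<Phi>)" using smooth unfolding smooth_on_pd_def by blast
    hence "continuous_on U (pdiff g \<Phi>)" by simp
    thus ?thesis using continuous_on_eq_continuous_at[OF U(1)] xsU by blast
  qed
  define r where "r = min (c / 4) 1"
  have r0: "r > 0" unfolding r_def using c0 by simp
  have ev: "eventually (\<lambda>y. \<forall>g. dist (pdiff g \<Phi> y) (pdiff g \<Phi> xs) < r) (at xs)"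
    apply (rule eventually_all_finite)
    using cont r0 unfolding isCont_def tendsto_iff by blast
  then obtain d where d0: "d > 0" and
    dP: "\<And>y. y \<noteq> xs \<Longrightarrow> dist y xs < d \<Longrightarrow> \<forall>g. dist (pdiff g \<Phi> y) (pdiff g \<Phi> xs) < r"
    unfolding eventually_at by auto
  define V where "V = (\<Sum>g\<in>UNIV. \<bar>pdiff g \<Phi> xs\<bar>) + 1"
  define \<delta>v where "\<delta>v = d / real CARD('n)"
  have dv0: "\<delta>v > 0" unfolding \<delta>v_def using d0 by simp
  have vnear: "(\<forall>g. \<bar>pdiff g \<Phi> y\<bar> \<le> V) \<and> pdiff \<alpha> \<Phi> y - pdiff \<beta> \<Phi> y \<ge> c / 2"
    if y: "\<forall>g. \<bar>y $ g - xs $ g\<bar> < \<delta>v" for y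
  proof -
    have close: "\<bar>pdiff g \<Phi> y - pdiff g \<Phi> xs\<bar> \<le> r" for g
    proof (cases "y = xs")
      case True thus ?thesis using r0 by simp
    next
      case False
      have "dist y xs \<le> (\<Sum>i\<in>UNIV. \<bar>(y - xs) $ i\<bar>)" unfolding dist_norm by (rule norm_le_l1_cart)
      also have "\<dots> < (\<Sum>i\<in>(UNIV::'n set). \<delta>v)"
        by (rule sum_strict_mono) (use y in auto)
      also have "\<dots> = d" unfolding \<delta>v_def by simp
      finally show ?thesis using dP[OF False] by (auto simp: dist_real_def less_imp_le)
    qed
    have "\<bar>pdiff g \<Phi> xs\<bar> \<le> (\<Sum>g\<in>UNIV. \<bar>pdiff g \<Phi> xs\<bar>)" for g
      by (rule member_le_sum) auto
    hence 1: "\<forall>g. \<bar>pdiff g \<Phi> y\<bar> \<le> V" using close r_def unfolding V_def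
      by (smt (verit, ccfv_SIG))
    have "pdiff \<alpha> \<Phi> y - pdiff \<beta> \<Phi> y \<ge> c / 2"
    proof -
      have "r \<le> c / 4" unfolding r_def by simp
      thus ?thesis using close[of \<alpha>] close[of \<beta>] unfolding c_def abs_le_iff by (elim conjE) argo
    qed
    with 1 show ?thesis by blast
  qed
  define A where "A = 2 * V / L2 + \<eta> / 2"
  define B where "B = U3 / (2 * L2) + \<eta> / 2 + 1"
  define E where "E = exp B"
  have V0: "V \<ge> 1" unfolding V_def by (simp add: sum_nonneg)
  have A0: "A \<ge> 0" unfolding A_def using V0 L2 eta by simp
  have B0: "B > 0"
  proof -
    have "U3 / (2 * L2) > 0" using U3 L2 by simp
    thus ?thesis unfolding B_def using eta by argo
  qed
  have E1: "E \<ge> 1" unfolding E_def using B0 by simp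
  define \<epsilon> where "\<epsilon> = min 1 (c / (4 * (U3 + 2 * \<eta> * U2 + 1)))"
  have pos4: "U3 + 2 * \<eta> * U2 + 1 > 0"
  proof -
    have "2 * \<eta> * U2 \<ge> 0" using eta U2 by simp
    thus ?thesis using U3 by argo
  qed
  have eps0: "\<epsilon> > 0" unfolding \<epsilon>_def using c0 pos4 by (simp del: mult_pos_pos)
  have eps1: "\<epsilon> \<le> 1" unfolding \<epsilon>_def by simp
  have epsc: "U3 * \<epsilon>\<^sup>2 + 2 * \<eta> * U2 * \<epsilon> \<le> c / 4"
  proof -
    have "U3 * \<epsilon>\<^sup>2 \<le> U3 * \<epsilon>" using eps0 eps1 U3 by (simp add: power2_eq_square mult_left_le)
    moreover have "\<epsilon> * (U3 + 2 * \<eta> * U2 + 1) \<le> c / 4"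
    proof -
      have pos: "U3 + 2 * \<eta> * U2 + 1 > 0" by (rule pos4)
      have "\<epsilon> \<le> c / (4 * (U3 + 2 * \<eta> * U2 + 1))" unfolding \<epsilon>_def by simp
      thus ?thesis using pos by (simp add: field_simps)
    qed
    ultimately show ?thesis using eps0 by (simp add: algebra_simps)
  qed
  define h where "h = \<epsilon> / (E * (A + 1))"
  have h0: "h > 0" unfolding h_def using eps0 E1 A0 by simp
  define \<delta> where "\<delta> = h * \<epsilon> / (4 * E)"
  have d0': "\<delta> > 0" unfolding \<delta>_def using h0 eps0 E1 by simp
  have key: "(2 * \<delta> / h + A * h / 2) * E \<le> \<epsilon>"
  proof -
    have e1: "2 * \<delta> / h * E = \<epsilon> / 2" unfolding \<delta>_def using h0 E1 by (simp add: field_simps)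
    have hE: "h * E = \<epsilon> / (A + 1)"
    proof -
      have nz: "E * (A + 1) \<noteq> 0" using E1 A0 by auto
      have "h * (E * (A + 1)) = \<epsilon>" unfolding h_def using nz by simp
      thus ?thesis using A0 by (simp add: eq_divide_eq mult.assoc)
    qed
    have e2: "A * h / 2 * E = A * (\<epsilon> / (A + 1)) / 2" using hE by (simp add: algebra_simps)
    have "(2 * \<delta> / h + A * h / 2) * E = \<epsilon> / 2 + A * (\<epsilon> / (A + 1)) / 2"
      by (simp only: distrib_right e1 e2)
    also have "A * (\<epsilon> / (A + 1)) / 2 \<le> \<epsilon> / 2"
    proof -
      have "A * (\<epsilon> / (A + 1)) \<le> (A + 1) * (\<epsilon> / (A + 1))"
        by (rule mult_right_mono) (use A0 eps0 in auto)
      also have "\<dots> = \<epsilon>" using A0 by simp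
      finally have "A * (\<epsilon> / (A + 1)) \<le> \<epsilon>" .
      thus ?thesis by (rule divide_right_mono) simp
    qed
    finally show ?thesis by simp
  qed
  define \<delta>' where "\<delta>' = min \<delta> (min \<delta>v m)"
  have dd0: "\<delta>' > 0" unfolding \<delta>'_def using d0' dv0 m0 by simp
  define T where "T = 4 * h + 16 * U2 * \<epsilon> / c + 1"
  have T0: "T > 0"
  proof -
    have "16 * U2 * \<epsilon> / c > 0" using U2 eps0 c0 by simp
    thus ?thesis unfolding T_def using h0 by argo
  qed
  obtain a where a0: "a \<ge> 0" and near: "\<And>t g. t \<in> {a..a+T} \<Longrightarrow> \<bar>x t $ g - xs $ g\<bar> < \<delta>'"
  proof -
    from recur[rule_format, OF dd0 T0] obtain a where "a \<ge> 0" "\<forall>t\<in>{a..a+T}. \<forall>g. \<bar>x t $ g - xs $ g\<bar> < \<delta>'"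
      by blast
    thus ?thesis using that by blast
  qed
  have xpos: "x t $ g > 0" and xle1: "x t $ g \<le> 1" if "t \<ge> 0" for t g
  proof -
    have xi: "x t \<in> prob_simplex_interior" using interior that by blast
    thus "x t $ g > 0" by (simp add: prob_simplex_interior_def)
    have "x t $ g \<le> (\<Sum>a\<in>UNIV. x t $ a)"
      by (rule member_le_sum) (use xi in \<open>auto simp: prob_simplex_interior_def less_imp_le\<close>)
    thus "x t $ g \<le> 1" using xi by (simp add: prob_simplex_interior_def)
  qed
  have xm: "m \<le> x t $ g" if "t \<in> {a..a+T}" "g = \<alpha> \<or> g = \<beta>" for t g
  proof -
    have "\<delta>' \<le> m" unfolding \<delta>'_def by simp
    moreover have "m \<le> xs $ g / 2" using ma that(2) by auto
    ultimately show ?thesis using near[OF that(1), of g] unfolding abs_less_iff by (elim conjE) argo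
  qed
  have vt: "(\<forall>g. \<bar>pdiff g \<Phi> (x t)\<bar> \<le> V) \<and> pdiff \<alpha> \<Phi> (x t) - pdiff \<beta> \<Phi> (x t) \<ge> c / 2"
    if "t \<in> {a..a+T}" for t
  proof (rule vnear, intro allI)
    fix g have "\<delta>' \<le> \<delta>v" unfolding \<delta>'_def by simp
    thus "\<bar>x t $ g - xs $ g\<bar> < \<delta>v" using near[OF that, of g] by simp
  qed
  have acc: "ID_rhs \<theta> \<Phi> \<eta> (x t) (xd t) $ g \<le> A + B * (xd t $ g)\<^sup>2"
    if "t \<in> {a..a+T}" "g = \<alpha> \<or> g = \<beta>" for t g
  proof -
    have t0: "t \<ge> 0" using that a0 by auto
    have "ID_rhs \<theta> \<Phi> \<eta> (x t) (xd t) $ g \<le> (2 * V / L2 + \<eta> / 2) + (U3 / (2 * L2) + \<eta> / 2 + 1) * (xd t $ g)\<^sup>2"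
    proof (rule acc_upper)
      show "\<And>b. x t $ b > 0" using xpos t0 by blast
      show "\<And>s. s > 0 \<Longrightarrow> (deriv ^^ 2) \<theta> s > 0" using th2pos unfolding th2_def .
      show "\<And>s. s > 0 \<Longrightarrow> (deriv ^^ 3) \<theta> s < 0" using th3neg unfolding th3_def .
      show "\<And>b. \<bar>pdiff b \<Phi> (x t)\<bar> \<le> V" using vt[OF that(1)] by blast
      show "L2 > 0" by (rule L2)
      show "L2 \<le> (deriv ^^ 2) \<theta> (x t $ g)" using L2b(1)[OF xm[OF that] xle1[OF t0]] unfolding th2_def .
      show "- (deriv ^^ 3) \<theta> (x t $ g) \<le> U3" using L2b(3)[OF xm[OF that] xle1[OF t0]] unfolding th3_def by simp
      show "\<eta> \<ge> 0" by (rule eta)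
    qed
    thus ?thesis unfolding A_def B_def .
  qed
  have xder: "((\<lambda>s. x s $ g) has_real_derivative xd t $ g) (at t)" if "t > 0" for t g
  proof -
    have "(x has_vector_derivative xd t) (at t within {0..})" using dx that by auto
    moreover have "at t within {0..} = at t"
      by (rule at_within_interior) (use that in simp)
    ultimately show ?thesis using vd_comp[of xd] vd_comp[of x] by simp
  qed
  have xdder: "((\<lambda>s. xd s $ g) has_real_derivative ID_rhs \<theta> \<Phi> \<eta> (x t) (xd t) $ g) (at t)" if "t > 0" for t g
  proof -
    have "(xd has_vector_derivative ID_rhs \<theta> \<Phi> \<eta> (x t) (xd t)) (at t within {0..})" using ddx that by auto
    moreover have "at t within {0..} = at t"
      by (rule at_within_interior) (use that in simp)
    ultimately show ?thesis using vd_comp[of xd] vd_comp[of x] by simp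
  qed
  have inI: "s \<in> {a..a+T}" and spos: "s > 0"
    if "a + h \<le> s" "s \<le> a + T - h" for s
    using that h0 a0 by auto
  have speed: "\<bar>xd p $ g\<bar> \<le> \<epsilon>" if gab: "g = \<alpha> \<or> g = \<beta>" and p: "a + 2 * h \<le> p" "p \<le> a + T - 2 * h" for g p
  proof -
    define f where "f s = exp (- B * x s $ g)" for s
    define f' where "f' s = - B * xd s $ g * exp (- B * x s $ g)" for s
    define f'' where "f'' s = - B * exp (- B * x s $ g) * (ID_rhs \<theta> \<Phi> \<eta> (x s) (xd s) $ g - B * (xd s $ g)\<^sup>2)" for s
    have rng: "a + h \<le> s" "s \<le> a + T - h" if "p - h \<le> s" "s \<le> p + h" for s
      using that p by auto
    have "\<bar>f' p\<bar> \<le> (2 * B * \<delta>) / h + (B * A) * h / 2"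
    proof (rule onesided[where f=f and f'=f' and f''=f'' and K = "B * A"])
      show "h > 0" by (rule h0)
    next
      fix s assume "p - h \<le> s" "s \<le> p + h"
      note r = rng[OF this]
      have sp: "s > 0" using spos[OF r] .
      have de: "((\<lambda>s. exp (- B * x s $ g)) has_real_derivative exp (- B * x s $ g) * (- B * xd s $ g)) (at s)"
        by (rule DERIV_fun_exp, rule DERIV_cmult, rule xder[OF sp])
      show "(f has_real_derivative f' s) (at s)"
        unfolding f_def f'_def by (rule DERIV_cong[OF de]) (simp add: algebra_simps)
      have dm: "((\<lambda>s. (- B * xd s $ g) * exp (- B * x s $ g)) has_real_derivative
           (- B * xd s $ g) * (exp (- B * x s $ g) * (- B * xd s $ g)) + (- B * ID_rhs \<theta> \<Phi> \<eta> (x s) (xd s) $ g) * exp (- B * x s $ g)) (at s)"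
        by (rule DERIV_mult'[OF DERIV_cmult[OF xdder[OF sp]] de])
      show "(f' has_real_derivative f'' s) (at s)"
        unfolding f'_def f''_def by (rule DERIV_cong[OF dm]) (simp add: algebra_simps power2_eq_square)
      have e0: "exp (- B * x s $ g) > 0" by simp
      have e1: "exp (- B * x s $ g) \<le> 1" using B0 xpos[of s g] sp by (simp add: mult_nonneg_nonneg)
      have ac: "ID_rhs \<theta> \<Phi> \<eta> (x s) (xd s) $ g - B * (xd s $ g)\<^sup>2 \<le> A"
        using acc[OF inI[OF r] gab] by simp
      have "B * exp (- B * x s $ g) * (ID_rhs \<theta> \<Phi> \<eta> (x s) (xd s) $ g - B * (xd s $ g)\<^sup>2)
          \<le> B * exp (- B * x s $ g) * A"
        by (rule mult_left_mono[OF ac]) (use B0 e0 in simp)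
      also have "\<dots> \<le> B * 1 * A"
        by (rule mult_right_mono[OF mult_left_mono[OF e1]]) (use B0 A0 in auto)
      finally show "f'' s \<ge> - (B * A)" unfolding f''_def by simp
    next
      fix s assume "p - h \<le> s" "s \<le> p + h"
      note r = rng[OF this]
      have rp: "a + h \<le> p" "p \<le> a + T - h" using p h0 by auto
      have "\<bar>f s - f p\<bar> \<le> B * \<bar>x s $ g - x p $ g\<bar>"
        unfolding f_def
      proof (rule exp_lip)
        have "s > 0" "p > 0" using spos r rp by auto
        thus "0 \<le> x s $ g" "0 \<le> x p $ g" using xpos less_imp_le by auto
      qed (use B0 in simp)
      also have "\<dots> \<le> B * (2 * \<delta>)"
      proof (rule mult_left_mono)
        have "\<bar>x s $ g - xs $ g\<bar> < \<delta>'" "\<bar>x p $ g - xs $ g\<bar> < \<delta>'"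
          using near inI r rp by auto
        moreover have "\<delta>' \<le> \<delta>" unfolding \<delta>'_def by simp
        ultimately show "\<bar>x s $ g - x p $ g\<bar> \<le> 2 * \<delta>" unfolding abs_less_iff abs_le_iff
          by (elim conjE) argo
      qed (use B0 in simp)
      finally show "\<bar>f s - f p\<bar> \<le> 2 * B * \<delta>" by simp
    qed
    also have "(2 * B * \<delta>) / h + (B * A) * h / 2 = B * (2 * \<delta> / h + A * h / 2)"
      by (simp add: algebra_simps)
    finally have fp: "\<bar>f' p\<bar> \<le> B * (2 * \<delta> / h + A * h / 2)" .
    have pp: "p > 0" "p \<le> a + T" using p h0 a0 by auto
    have ep: "exp (- B * x p $ g) \<ge> 1 / E"
    proof -
      have "- B \<le> - B * x p $ g" using xle1[of p g] pp B0 by simp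
      hence "exp (- B) \<le> exp (- B * x p $ g)" by simp
      thus ?thesis unfolding E_def by (simp add: exp_minus field_simps)
    qed
    have "\<bar>f' p\<bar> = B * \<bar>xd p $ g\<bar> * exp (- B * x p $ g)"
      unfolding f'_def using B0 by (simp add: abs_mult)
    hence "B * \<bar>xd p $ g\<bar> * (1 / E) \<le> B * (2 * \<delta> / h + A * h / 2)"
      using fp ep B0 by (smt (verit, best) mult_left_mono zero_le_mult_iff abs_ge_zero)
    hence "B * (\<bar>xd p $ g\<bar> / E) \<le> B * (2 * \<delta> / h + A * h / 2)" by simp
    hence "\<bar>xd p $ g\<bar> / E \<le> 2 * \<delta> / h + A * h / 2" using B0 mult_le_cancel_left_pos by blast
    hence "\<bar>xd p $ g\<bar> \<le> (2 * \<delta> / h + A * h / 2) * E" using E1 by (simp add: field_simps)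
    thus ?thesis using key by simp
  qed
  define p0 where "p0 = a + 2 * h"
  define q0 where "q0 = a + T - 2 * h"
  have pq: "q0 - p0 = 16 * U2 * \<epsilon> / c + 1" unfolding p0_def q0_def T_def by simp
  have pq0: "p0 \<le> q0"
  proof -
    have "16 * U2 * \<epsilon> / c \<ge> 0" using U2 eps0 c0 by simp
    thus ?thesis using pq by argo
  qed
  have rng2: "a + h \<le> s" "s \<le> a + T - h" "s \<in> {a..a+T}" "s > 0" if "p0 \<le> s" "s \<le> q0" for s
    using that h0 a0 unfolding p0_def q0_def by auto
  define y where "y s = th2 (x s $ \<alpha>) * xd s $ \<alpha> - th2 (x s $ \<beta>) * xd s $ \<beta>" for s
  define y' where "y' s = (th3 (x s $ \<alpha>) * xd s $ \<alpha> * xd s $ \<alpha> + th2 (x s $ \<alpha>) * ID_rhs \<theta> \<Phi> \<eta> (x s) (xd s) $ \<alpha>)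
       - (th3 (x s $ \<beta>) * xd s $ \<beta> * xd s $ \<beta> + th2 (x s $ \<beta>) * ID_rhs \<theta> \<Phi> \<eta> (x s) (xd s) $ \<beta>)" for s
  have ych: "((\<lambda>s. th2 (x s $ g) * xd s $ g) has_real_derivative
       th3 (x s $ g) * xd s $ g * xd s $ g + th2 (x s $ g) * ID_rhs \<theta> \<Phi> \<eta> (x s) (xd s) $ g) (at s)"
    if "s > 0" for s g
  proof -
    have c1: "((\<lambda>s. th2 (x s $ g)) has_real_derivative th3 (x s $ g) * xd s $ g) (at s)"
      by (rule DERIV_chain2[OF d2 xder[OF that]]) (use xpos that in auto)
    show ?thesis
      by (rule DERIV_cong[OF DERIV_mult'[OF c1 xdder[OF that]]]) (simp add: algebra_simps)
  qed
  have yder: "(y has_real_derivative y' s) (at s)" if "s > 0" for s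
    unfolding y_def y'_def by (rule DERIV_diff[OF ych[OF that] ych[OF that]])
  have ybd: "\<bar>y s\<bar> \<le> 2 * U2 * \<epsilon>" if "p0 \<le> s" "s \<le> q0" for s
  proof -
    note r = rng2[OF that]
    have s0: "s \<ge> 0" using r by simp
    have sp: "a + 2 * h \<le> s" "s \<le> a + T - 2 * h" using that unfolding p0_def q0_def by auto
    have "\<bar>th2 (x s $ g) * xd s $ g\<bar> \<le> U2 * \<epsilon>" if "g = \<alpha> \<or> g = \<beta>" for g
    proof -
      have "\<bar>th2 (x s $ g) * xd s $ g\<bar> = th2 (x s $ g) * \<bar>xd s $ g\<bar>"
        using th2pos[of "x s $ g"] xpos[OF s0] by (simp add: abs_mult)
      also have "\<dots> \<le> U2 * \<epsilon>"
        apply (rule mult_mono)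
        using L2b(2)[OF xm[OF r(3) that] xle1[OF s0]] speed[OF that sp] that U2 th2pos[of "x s $ g"] xpos[OF s0]
        by auto
      finally show ?thesis .
    qed
    hence "\<bar>th2 (x s $ \<alpha>) * xd s $ \<alpha>\<bar> \<le> U2 * \<epsilon>" "\<bar>th2 (x s $ \<beta>) * xd s $ \<beta>\<bar> \<le> U2 * \<epsilon>" by auto
    thus ?thesis unfolding y_def by (simp add: abs_le_iff)
  qed
  have y'bd: "y' s \<ge> c / 4" if "p0 \<le> s" "s \<le> q0" for s
  proof -
    note r = rng2[OF that]
    have s0: "s \<ge> 0" using r by simp
    have sp: "a + 2 * h \<le> s" "s \<le> a + T - 2 * h" using that unfolding p0_def q0_def by auto
    have nz: "(deriv ^^ 2) \<theta> (x s $ g) \<noteq> 0" for g using th2pos[of "x s $ g"] xpos[OF s0] unfolding th2_def by auto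
    have eq: "y' s = (pdiff \<alpha> \<Phi> (x s) - pdiff \<beta> \<Phi> (x s)) + th3 (x s $ \<alpha>) * (xd s $ \<alpha>)\<^sup>2 / 2
       - th3 (x s $ \<beta>) * (xd s $ \<beta>)\<^sup>2 / 2 - \<eta> * y s"
      unfolding y'_def y_def th2_def th3_def by (rule y_identity[OF nz nz])
    have v: "pdiff \<alpha> \<Phi> (x s) - pdiff \<beta> \<Phi> (x s) \<ge> c / 2" using vt[OF r(3)] by blast
    have sa: "\<bar>xd s $ \<alpha>\<bar> \<le> \<epsilon>" using speed[OF _ sp] by blast
    have sq: "(xd s $ \<alpha>)\<^sup>2 \<le> \<epsilon>\<^sup>2"
      using sa by (metis abs_ge_zero power2_abs power_mono)
    have t3: "\<bar>th3 (x s $ \<alpha>)\<bar> \<le> U3" using L2b(3)[OF xm[OF r(3)] xle1[OF s0]] by blast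
    have a1: "th3 (x s $ \<alpha>) * (xd s $ \<alpha>)\<^sup>2 \<ge> - (U3 * \<epsilon>\<^sup>2)"
    proof -
      have "\<bar>th3 (x s $ \<alpha>) * (xd s $ \<alpha>)\<^sup>2\<bar> \<le> U3 * \<epsilon>\<^sup>2"
        unfolding abs_mult using t3 sq by (simp add: mult_mono)
      thus ?thesis by (simp add: abs_le_iff)
    qed
    have a2: "th3 (x s $ \<beta>) * (xd s $ \<beta>)\<^sup>2 \<le> 0"
      using th3neg[of "x s $ \<beta>"] xpos[OF s0] by (simp add: mult_nonpos_nonneg)
    have a3: "\<eta> * y s \<le> \<eta> * (2 * U2 * \<epsilon>)"
      by (rule mult_left_mono) (use ybd[OF that] eta in auto)
    have u0: "U3 * \<epsilon>\<^sup>2 \<ge> 0" using U3 by simp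
    have ee: "\<eta> * (2 * U2 * \<epsilon>) = 2 * \<eta> * U2 * \<epsilon>" by simp
    show ?thesis unfolding eq using v a1 a2 a3 epsc u0 ee by argo
  qed
  have "(\<lambda>s. y s - c / 4 * s) p0 \<le> (\<lambda>s. y s - c / 4 * s) q0"
  proof (rule DERIV_nonneg_imp_nondecreasing[of p0 q0 "\<lambda>s. y s - c / 4 * s"])
    show "p0 \<le> q0" by (rule pq0)
    fix s assume "p0 \<le> s" "s \<le> q0"
    have "((\<lambda>s. y s - c / 4 * s) has_real_derivative y' s - c / 4 * 1) (at s)"
      by (rule DERIV_diff[OF yder DERIV_cmult[OF DERIV_ident]]) (use rng2 \<open>p0 \<le> s\<close> \<open>s \<le> q0\<close> in auto)
    moreover have "y' s - c / 4 * 1 \<ge> 0" using y'bd[OF \<open>p0 \<le> s\<close> \<open>s \<le> q0\<close>] by simp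
    ultimately show "\<exists>D. ((\<lambda>s. y s - c / 4 * s) has_real_derivative D) (at s) \<and> D \<ge> 0" by blast
  qed
  hence inc: "c / 4 * (q0 - p0) \<le> y q0 - y p0" by (simp add: field_simps)
  have "c / 4 * (q0 - p0) = 4 * U2 * \<epsilon> + c / 4" unfolding pq using c0 by (simp add: field_simps)
  moreover have "y q0 - y p0 \<le> 4 * U2 * \<epsilon>"
    using ybd[of q0] ybd[of p0] pq0 by (simp add: abs_le_iff)
  ultimately show False using inc c0 by argo
qed

theorem proposition4p1:
  fixes \<theta> :: "real \<Rightarrow> real"
    and \<Phi> :: "real ^ 'n \<Rightarrow> real"
    and U :: "(real ^ 'n) set"
    and \<eta> :: real
    and x xd :: "real \<Rightarrow> real ^ 'n"
    and xs :: "real ^ 'n"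
  assumes n: "CARD('n) \<ge> 2"
    and ker: "kernel \<theta>"
    and U: "open U" "prob_simplex \<subseteq> U"
    and smooth: "smooth_on_pd U \<Phi>"
    and lip: "\<exists>C. C-lipschitz_on U \<Phi>"
    and eta: "\<eta> \<ge> 0"
    and interior: "\<forall>t\<ge>0. x t \<in> prob_simplex_interior"
    and dx: "\<forall>t\<ge>0. (x has_vector_derivative xd t) (at t within {0..})"
    and ddx: "\<forall>t\<ge>0. (xd has_vector_derivative ID_rhs \<theta> \<Phi> \<eta> (x t) (xd t)) (at t within {0..})"
    and xs: "xs \<in> prob_simplex"
    and recur: "\<forall>\<delta>>0. \<forall>T>0. \<exists>a\<ge>0. \<forall>t\<in>{a..a+T}. \<forall>\<alpha>. \<bar>x t $ \<alpha> - xs $ \<alpha>\<bar> < \<delta>"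
  shows "\<forall>\<alpha> \<beta>. xs $ \<alpha> > 0 \<longrightarrow> xs $ \<beta> > 0 \<longrightarrow> pdiff \<alpha> \<Phi> xs = pdiff \<beta> \<Phi> xs"
proof (intro allI impI)
  fix \<alpha> \<beta> assume a: "xs $ \<alpha> > 0" and b: "xs $ \<beta> > 0"
  show "pdiff \<alpha> \<Phi> xs = pdiff \<beta> \<Phi> xs"
  proof (rule linorder_cases[of "pdiff \<alpha> \<Phi> xs" "pdiff \<beta> \<Phi> xs"])
    assume "pdiff \<alpha> \<Phi> xs < pdiff \<beta> \<Phi> xs"
    from main_contra[OF ker U smooth eta interior dx ddx xs recur b a this] show ?thesis ..
  next
    assume "pdiff \<beta> \<Phi> xs < pdiff \<alpha> \<Phi> xs"
    from main_contra[OF ker U smooth eta interior dx ddx xs recur a b this] show ?thesis ..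
  qed
qed

end
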